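(* A restriction semigroup is isomorphic (as a $(2,1,1)$-algebra) to a $W$-product $W(T,Y)$ of a semilattice $Y$ by a monoid $T$ if and only if it is proper and its underlying left partial action is an action (i.e. defined everywhere). In particular, a restriction semigroup is isomorphic to a semidirect product $T\ltimes Y$ of a semilattice by a monoid if and only if it is proper and its underlying left partial action is an action by order-automorphisms, equivalently, both its underlying left and right partial actions are (everywhere defined) actions.
   Context: A restriction semigroup is an algebra $(S,\cdot,{}^*,{}^+)$ where $(S,\cdot)$ is a semigroup and the identities $xx^*=x$, $x^*y^*=y^*x^*$, $(xy^* )^*=x^*y^*$, $x^*y=y(xy)^*$, $x^+x=x$, $x^+y^+=y^+x^+$, $(x^+y)^+=x^+y^+$, $xy^+=(xy)^+x$, $(x^+)^*=x^+$, $(x^* )^+=x^*$ hold. $P(S)=\{x^*\colon x\in S\}$ is the semilattice of projections; $\sigma$ is the least congruence identifying all projections; $S$ is proper if ($a^*=b^*$, $a\,\sigma\, b$) $\Rightarrow a=b$ and ($a^+=b^+$, $a\,\sigma\, b$) $\Rightarrow a=b$. For a proper restriction semigroup $S$, the underlying left partial action of $T=S/\sigma$ on $E=P(S)$ is: $t\cdot e$ is defined iff there is $a\in t$ with $a^*\ge e$, and then $t\cdot e=(ae)^+$. The underlying right partial action $\circ$ is its reverse: $e\circ t$ is defined iff $e=t\cdot f$ for some $f$ and then $e\circ t=f$. $W$-product: if a monoid $T$ acts on the left on a semilattice $Y$ (written $t*y$) by order-embeddings such that each range $t*Y$ is an order ideal of $Y$, then $W(T,Y)=\{(t*y,t)\colon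 y\in Y,t\in T\}$ with $(t*y,t)(s*x,s)=(t*y\wedge(ts)*x,ts)$, $(t*y,t)^*=(y,1)$, $(t*y,t)^+=(t*y,1)$. If the action is by order-automorphisms, $W(T,Y)$ is called the semidirect product $T\ltimes Y$ (as a set it is $Y\times T$). *)

theory Defs
  imports Main
begin

record 'a r_alg =
  carr :: "'a set"
  mul  :: "'a \<Rightarrow> 'a \<Rightarrow> 'a"
  st   :: "'a \<Rightarrow> 'a"
  pl   :: "'a \<Rightarrow> 'a"

definition restriction_semigroup :: "('a, 'b) r_alg_scheme \<Rightarrow> bool" where
  "restriction_semigroup S \<longleftrightarrow>
     (\<forall>x\<in>carr S. \<forall>y\<in>carr S. mul S x y \<in> carr S) \<and>
     (\<forall>x\<in>carr S. st S x \<in> carr S \<and> pl S x \<in> carr S) \<and>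
     (\<forall>x\<in>carr S. \<forall>y\<in>carr S. \<forall>z\<in>carr S. mul S (mul S x y) z = mul S x (mul S y z)) \<and>
     (\<forall>x\<in>carr S. \<forall>y\<in>carr S.
        mul S x (st S x) = x \<and>
        mul S (st S x) (st S y) = mul S (st S y) (st S x) \<and>
        st S (mul S x (st S y)) = mul S (st S x) (st S y) \<and>
        mul S (st S x) y = mul S y (st S (mul S x y)) \<and>
        mul S (pl S x) x = x \<and>
        mul S (pl S x) (pl S y) = mul S (pl S y) (pl S x) \<and>
        pl S (mul S (pl S x) y) = mul S (pl S x) (pl S y) \<and>
        mul S x (pl S y) = mul S (pl S (mul S x y)) x \<and>
        st S (pl S x) = pl S x \<and>
        pl S (st S x) = st S x)"

definition projections :: "('a, 'b) r_alg_scheme \<Rightarrow> 'a set" where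
  "projections S = st S ` carr S"

definition proj_le :: "('a, 'b) r_alg_scheme \<Rightarrow> 'a \<Rightarrow> 'a \<Rightarrow> bool" where
  "proj_le S e f \<longleftrightarrow> e = mul S e f"

definition congruence :: "('a, 'b) r_alg_scheme \<Rightarrow> ('a \<times> 'a) set \<Rightarrow> bool" where
  "congruence S R \<longleftrightarrow> equiv (carr S) R \<and>
     (\<forall>a b c d. (a, b) \<in> R \<longrightarrow> (c, d) \<in> R \<longrightarrow> (mul S a c, mul S b d) \<in> R) \<and>
     (\<forall>a b. (a, b) \<in> R \<longrightarrow> (st S a, st S b) \<in> R \<and> (pl S a, pl S b) \<in> R)"

definition sigma :: "('a, 'b) r_alg_scheme \<Rightarrow> ('a \<times> 'a) set" where
  "sigma S = \<Inter> {R. congruence S R \<and> projections S \<times> projections S \<subseteq> R}"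

definition proper :: "('a, 'b) r_alg_scheme \<Rightarrow> bool" where
  "proper S \<longleftrightarrow> (\<forall>a\<in>carr S. \<forall>b\<in>carr S.
     (st S a = st S b \<and> (a, b) \<in> sigma S \<longrightarrow> a = b) \<and>
     (pl S a = pl S b \<and> (a, b) \<in> sigma S \<longrightarrow> a = b))"

definition sigma_classes :: "('a, 'b) r_alg_scheme \<Rightarrow> 'a set set" where
  "sigma_classes S = carr S // sigma S"

definition lpa_defined :: "('a, 'b) r_alg_scheme \<Rightarrow> 'a set \<Rightarrow> 'a \<Rightarrow> bool" where
  "lpa_defined S t e \<longleftrightarrow> (\<exists>a\<in>t. proj_le S e (st S a))"

definition lpa :: "('a, 'b) r_alg_scheme \<Rightarrow> 'a set \<Rightarrow> 'a \<Rightarrow> 'a" where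
  "lpa S t e = pl S (mul S (SOME a. a \<in> t \<and> proj_le S e (st S a)) e)"

text \<open>Underlying right partial action: e o t defined iff e = t . f for some f (then e o t = f).\<close>
definition rpa_defined :: "('a, 'b) r_alg_scheme \<Rightarrow> 'a \<Rightarrow> 'a set \<Rightarrow> bool" where
  "rpa_defined S e t \<longleftrightarrow> (\<exists>f\<in>projections S. lpa_defined S t f \<and> lpa S t f = e)"

definition left_action_total :: "('a, 'b) r_alg_scheme \<Rightarrow> bool" where
  "left_action_total S \<longleftrightarrow>
     (\<forall>t\<in>sigma_classes S. \<forall>e\<in>projections S. lpa_defined S t e)"

definition right_action_total :: "('a, 'b) r_alg_scheme \<Rightarrow> bool" where
  "right_action_total S \<longleftrightarrow>
     (\<forall>t\<in>sigma_classes S. \<forall>e\<in>projections S. rpa_defined S e t)"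

definition left_action_by_order_automorphisms :: "('a, 'b) r_alg_scheme \<Rightarrow> bool" where
  "left_action_by_order_automorphisms S \<longleftrightarrow> left_action_total S \<and>
     (\<forall>t\<in>sigma_classes S.
        bij_betw (lpa S t) (projections S) (projections S) \<and>
        (\<forall>e\<in>projections S. \<forall>f\<in>projections S.
           proj_le S e f \<longleftrightarrow> proj_le S (lpa S t e) (lpa S t f)))"

text \<open>Data: monoid (T, tm, u), semilattice (Y, meet) with order y <= z iff meet y z = y,
  and a left action act of T on Y by order-embeddings with order-ideal ranges.\<close>
definition W_data :: "'t set \<Rightarrow> ('t \<Rightarrow> 't \<Rightarrow> 't) \<Rightarrow> 't \<Rightarrow> 'y set \<Rightarrow> ('y \<Rightarrow> 'y \<Rightarrow> 'y)
                       \<Rightarrow> ('t \<Rightarrow> 'y \<Rightarrow> 'y) \<Rightarrow> bool" where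
  "W_data T tm u Y meet act \<longleftrightarrow>
     u \<in> T \<and>
     (\<forall>t\<in>T. \<forall>s\<in>T. tm t s \<in> T) \<and>
     (\<forall>t\<in>T. \<forall>s\<in>T. \<forall>r\<in>T. tm (tm t s) r = tm t (tm s r)) \<and>
     (\<forall>t\<in>T. tm u t = t \<and> tm t u = t) \<and>
     (\<forall>x\<in>Y. \<forall>y\<in>Y. meet x y \<in> Y) \<and>
     (\<forall>x\<in>Y. \<forall>y\<in>Y. \<forall>z\<in>Y. meet (meet x y) z = meet x (meet y z)) \<and>
     (\<forall>x\<in>Y. \<forall>y\<in>Y. meet x y = meet y x) \<and>
     (\<forall>x\<in>Y. meet x x = x) \<and>
     (\<forall>t\<in>T. \<forall>y\<in>Y. act t y \<in> Y) \<and>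
     (\<forall>y\<in>Y. act u y = y) \<and>
     (\<forall>t\<in>T. \<forall>s\<in>T. \<forall>y\<in>Y. act (tm t s) y = act t (act s y)) \<and>
     (\<forall>t\<in>T. \<forall>y\<in>Y. \<forall>z\<in>Y. meet y z = y \<longleftrightarrow> meet (act t y) (act t z) = act t y) \<and>
     (\<forall>t\<in>T. \<forall>y\<in>Y. \<forall>z\<in>Y. meet z (act t y) = z \<longrightarrow> z \<in> act t ` Y)"

definition SD_data :: "'t set \<Rightarrow> ('t \<Rightarrow> 't \<Rightarrow> 't) \<Rightarrow> 't \<Rightarrow> 'y set \<Rightarrow> ('y \<Rightarrow> 'y \<Rightarrow> 'y)
                       \<Rightarrow> ('t \<Rightarrow> 'y \<Rightarrow> 'y) \<Rightarrow> bool" where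
  "SD_data T tm u Y meet act \<longleftrightarrow> W_data T tm u Y meet act \<and> (\<forall>t\<in>T. act t ` Y = Y)"

definition W_alg :: "'t set \<Rightarrow> ('t \<Rightarrow> 't \<Rightarrow> 't) \<Rightarrow> 't \<Rightarrow> 'y set \<Rightarrow> ('y \<Rightarrow> 'y \<Rightarrow> 'y)
                       \<Rightarrow> ('t \<Rightarrow> 'y \<Rightarrow> 'y) \<Rightarrow> ('y \<times> 't) r_alg" where
  "W_alg T tm u Y meet act =
     \<lparr> carr = {(act t y, t) | y t. y \<in> Y \<and> t \<in> T},
       mul = (\<lambda>(a, t) (b, s). (meet a (act t b), tm t s)),
       st = (\<lambda>(a, t). (THE y. y \<in> Y \<and> act t y = a, u)),
       pl = (\<lambda>(a, t). (a, u)) \<rparr>"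

definition isomorphic :: "('a, 'c) r_alg_scheme \<Rightarrow> ('b, 'd) r_alg_scheme \<Rightarrow> bool" where
  "isomorphic S R \<longleftrightarrow> (\<exists>f. bij_betw f (carr S) (carr R) \<and>
     (\<forall>x\<in>carr S. \<forall>y\<in>carr S. f (mul S x y) = mul R (f x) (f y)) \<and>
     (\<forall>x\<in>carr S. f (st S x) = st R (f x) \<and> f (pl S x) = pl R (f x)))"

text \<open>Without loss of
  generality T and Y are taken with carriers in the types 'a set and 'a
  (T is isomorphic to S/sigma and Y to P(S) for any such representation).\<close>
definition iso_to_W_product :: "'a r_alg \<Rightarrow> bool" where
  "iso_to_W_product S \<longleftrightarrow> (\<exists>(T :: 'a set set) tm u (Y :: 'a set) meet act.
      W_data T tm u Y meet act \<and> isomorphic S (W_alg T tm u Y meet act))"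

definition iso_to_semidirect_product :: "'a r_alg \<Rightarrow> bool" where
  "iso_to_semidirect_product S \<longleftrightarrow> (\<exists>(T :: 'a set set) tm u (Y :: 'a set) meet act.
      SD_data T tm u Y meet act \<and> isomorphic S (W_alg T tm u Y meet act))"

end

theory Submission
  imports Defs
begin

locale rs =
  fixes S :: "('a, 'b) r_alg_scheme"
  assumes rs: "restriction_semigroup S"
begin

abbreviation C where "C \<equiv> carr S"
abbreviation M (infixl "\<cdot>" 70) where "x \<cdot> y \<equiv> mul S x y"
abbreviation P where "P \<equiv> projections S"

lemma mul_C[simp,intro]: "x \<in> C \<Longrightarrow> y \<in> C \<Longrightarrow> x \<cdot> y \<in> C"
  using rs unfolding restriction_semigroup_def by blast
lemma st_C[simp,intro]: "x \<in> C \<Longrightarrow> st S x \<in> C"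
  using rs unfolding restriction_semigroup_def by blast
lemma pl_C[simp,intro]: "x \<in> C \<Longrightarrow> pl S x \<in> C"
  using rs unfolding restriction_semigroup_def by blast
lemma assoc[simp]: "x \<in> C \<Longrightarrow> y \<in> C \<Longrightarrow> z \<in> C \<Longrightarrow> (x \<cdot> y) \<cdot> z = x \<cdot> (y \<cdot> z)"
  using rs unfolding restriction_semigroup_def by blast

lemma ax:
  assumes "x \<in> C" "y \<in> C"
  shows r1: "x \<cdot> st S x = x"
   and r2: "st S x \<cdot> st S y = st S y \<cdot> st S x"
   and r3: "st S (x \<cdot> st S y) = st S x \<cdot> st S y"
   and r4: "st S x \<cdot> y = y \<cdot> st S (x \<cdot> y)"
   and l1: "pl S x \<cdot> x = x"
   and l2: "pl S x \<cdot> pl S y = pl S y \<cdot> pl S x"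
   and l3: "pl S (pl S x \<cdot> y) = pl S x \<cdot> pl S y"
   and l4: "x \<cdot> pl S y = pl S (x \<cdot> y) \<cdot> x"
   and sp: "st S (pl S x) = pl S x"
   and ps: "pl S (st S x) = st S x"
  using rs assms unfolding restriction_semigroup_def by blast+

lemma stst: "x \<in> C \<Longrightarrow> st S (st S x) = st S x"
  using ps[of x x] sp[of "st S x" "st S x"] by simp

lemma P_def': "P = {e. e \<in> C \<and> st S e = e}"
  unfolding projections_def using stst by force

lemma PD: "e \<in> P \<Longrightarrow> e \<in> C" "e \<in> P \<Longrightarrow> st S e = e"
  by (auto simp: P_def')
lemma P_pl: "e \<in> P \<Longrightarrow> pl S e = e"
  using ps[of e e] PD by simp
lemma st_P[simp,intro]: "x \<in> C \<Longrightarrow> st S x \<in> P"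
  unfolding projections_def by blast
lemma pl_P[simp,intro]: "x \<in> C \<Longrightarrow> pl S x \<in> P"
  using sp[of x x] unfolding P_def' by simp
lemma P_C[simp, intro]: "e \<in> P \<Longrightarrow> e \<in> C" by (rule PD)
lemma P_st[simp]: "e \<in> P \<Longrightarrow> st S e = e" by (rule PD)
lemma P_pl'[simp]: "e \<in> P \<Longrightarrow> pl S e = e" by (rule P_pl)

lemma P_idem[simp]: "e \<in> P \<Longrightarrow> e \<cdot> e = e"
  using r1[of e e] by simp
lemma P_comm: "e \<in> P \<Longrightarrow> f \<in> P \<Longrightarrow> e \<cdot> f = f \<cdot> e"
  using r2[of e f] by simp
lemma P_mul[simp,intro]: "e \<in> P \<Longrightarrow> f \<in> P \<Longrightarrow> e \<cdot> f \<in> P"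
  using r3[of e f] unfolding P_def' by simp
lemma P_lcomm: "e \<in> P \<Longrightarrow> f \<in> P \<Longrightarrow> x \<in> C \<Longrightarrow> e \<cdot> (f \<cdot> x) = f \<cdot> (e \<cdot> x)"
proof -
  assume a: "e \<in> P" "f \<in> P" "x \<in> C"
  have "(e \<cdot> f) \<cdot> x = (f \<cdot> e) \<cdot> x" using P_comm a by simp
  thus ?thesis using a by simp
qed
lemma P_lidem: "e \<in> P \<Longrightarrow> x \<in> C \<Longrightarrow> e \<cdot> (e \<cdot> x) = e \<cdot> x"
proof -
  assume a: "e \<in> P" "x \<in> C"
  have "e \<cdot> (e \<cdot> x) = (e \<cdot> e) \<cdot> x" by (rule assoc[symmetric]) (use a in auto)
  also have "\<dots> = e \<cdot> x" using a by (simp del: assoc)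
  finally show ?thesis .
qed

lemma st_mulP: "x \<in> C \<Longrightarrow> e \<in> P \<Longrightarrow> st S (x \<cdot> e) = st S x \<cdot> e"
  using r3[of x e] by simp
lemma pl_Pmul: "x \<in> C \<Longrightarrow> e \<in> P \<Longrightarrow> pl S (e \<cdot> x) = e \<cdot> pl S x"
  using l3[of e x] by simp
lemma st_prod_le: "x \<in> C \<Longrightarrow> y \<in> C \<Longrightarrow> st S (x \<cdot> y) \<cdot> st S y = st S (x \<cdot> y)"
  using r3[of "x \<cdot> y" y] r1[of y y] by simp
lemma pl_prod_le: "x \<in> C \<Longrightarrow> y \<in> C \<Longrightarrow> pl S x \<cdot> pl S (x \<cdot> y) = pl S (x \<cdot> y)"
proof -
  assume a: "x \<in> C" "y \<in> C"
  have "pl S (pl S x \<cdot> (x \<cdot> y)) = pl S x \<cdot> pl S (x \<cdot> y)" using l3[of x "x \<cdot> y"] a by simp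
  moreover have "pl S x \<cdot> (x \<cdot> y) = x \<cdot> y"
  proof -
    have "(pl S x \<cdot> x) \<cdot> y = x \<cdot> y" using l1[of x x] a by simp
    thus ?thesis using a by simp
  qed
  ultimately show ?thesis by simp
qed
lemma pl_mul_pl: "x \<in> C \<Longrightarrow> y \<in> C \<Longrightarrow> pl S (x \<cdot> pl S y) = pl S (x \<cdot> y)"
proof -
  assume a: "x \<in> C" "y \<in> C"
  have "pl S (x \<cdot> pl S y) = pl S (pl S (x \<cdot> y) \<cdot> x)" using l4[OF a] by simp
  also have "\<dots> = pl S (x \<cdot> y) \<cdot> pl S x" using l3[of "x \<cdot> y" x] a by simp
  also have "\<dots> = pl S x \<cdot> pl S (x \<cdot> y)" using P_comm a by simp
  also have "\<dots> = pl S (x \<cdot> y)" using pl_prod_le a by simp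
  finally show ?thesis .
qed
lemma st_st_mul: "x \<in> C \<Longrightarrow> y \<in> C \<Longrightarrow> st S (st S x \<cdot> y) = st S (x \<cdot> y)"
proof -
  assume a: "x \<in> C" "y \<in> C"
  have "st S (st S x \<cdot> y) = st S (y \<cdot> st S (x \<cdot> y))" using r4[OF a] by simp
  also have "\<dots> = st S y \<cdot> st S (x \<cdot> y)" using r3[of y "x \<cdot> y"] a by simp
  also have "\<dots> = st S (x \<cdot> y) \<cdot> st S y" using P_comm a by simp
  also have "\<dots> = st S (x \<cdot> y)" using st_prod_le a by simp
  finally show ?thesis .
qed
lemma pl_in: "x \<in> C \<Longrightarrow> e \<in> P \<Longrightarrow> e \<cdot> pl S x = pl S x \<Longrightarrow> e \<cdot> x = x"
proof -
  assume a: "x \<in> C" "e \<in> P" "e \<cdot> pl S x = pl S x"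
  have "e \<cdot> x = e \<cdot> (pl S x \<cdot> x)" using l1[of x x] a by simp
  also have "\<dots> = (e \<cdot> pl S x) \<cdot> x" by (rule assoc[symmetric]) (use a in auto)
  also have "\<dots> = x" using a l1[of x x] by (simp del: assoc)
  finally show ?thesis .
qed
lemma st_in: "x \<in> C \<Longrightarrow> e \<in> P \<Longrightarrow> st S x \<cdot> e = st S x \<Longrightarrow> x \<cdot> e = x"
proof -
  assume a: "x \<in> C" "e \<in> P" "st S x \<cdot> e = st S x"
  have "x \<cdot> e = (x \<cdot> st S x) \<cdot> e" using r1[of x x] a by simp
  also have "\<dots> = x \<cdot> (st S x \<cdot> e)" using a by simp
  also have "\<dots> = x" using a r1[of x x] by (simp del: assoc)
  finally show ?thesis .
qed

end

context rs begin

definition Rs where "Rs = {(a,b). a \<in> C \<and> b \<in> C \<and> (\<exists>e\<in>P. e \<cdot> a = e \<cdot> b)}"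

lemma Rs_equiv: "equiv C Rs"
proof (rule equivI)
  show "Rs \<subseteq> C \<times> C" unfolding Rs_def by auto
  show "refl_on C Rs" unfolding refl_on_def Rs_def by auto
  show "sym Rs" unfolding sym_def Rs_def by (clarsimp, metis)
  show "trans Rs" unfolding trans_def
  proof (intro allI impI)
    fix a b c assume "(a,b) \<in> Rs" "(b,c) \<in> Rs"
    then obtain e f where h: "a \<in> C" "b \<in> C" "c \<in> C" "e \<in> P" "f \<in> P" and he: "e \<cdot> a = e \<cdot> b" "f \<cdot> b = f \<cdot> c"
      unfolding Rs_def by auto
    have "(e \<cdot> f) \<cdot> a = e \<cdot> (f \<cdot> a)" using h by simp
    also have "\<dots> = f \<cdot> (e \<cdot> a)" using h P_lcomm by blast
    also have "\<dots> = f \<cdot> (e \<cdot> b)" using he by simp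
    also have "\<dots> = e \<cdot> (f \<cdot> b)" using h P_lcomm by blast
    also have "\<dots> = e \<cdot> (f \<cdot> c)" using he by simp
    also have "\<dots> = (e \<cdot> f) \<cdot> c" using h by simp
    finally show "(a,c) \<in> Rs" unfolding Rs_def using h by blast
  qed
qed

lemma Rs_PP: "P \<times> P \<subseteq> Rs"
proof safe
  fix e f assume h: "e \<in> P" "f \<in> P"
  have "(e \<cdot> f) \<cdot> e = e \<cdot> (e \<cdot> f)" using h P_comm by simp
  also have "\<dots> = e \<cdot> f" using h P_lidem by simp
  also have "\<dots> = e \<cdot> (f \<cdot> f)" using h by simp
  also have "\<dots> = (e \<cdot> f) \<cdot> f" using h by simp
  finally show "(e,f) \<in> Rs" unfolding Rs_def using h by blast
qed

lemma Rs_mul: assumes "(a,b) \<in> Rs" "(c,d) \<in> Rs" shows "(a \<cdot> c, b \<cdot> d) \<in> Rs"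
proof -
  obtain e f where h: "a \<in> C" "b \<in> C" "c \<in> C" "d \<in> C" "e \<in> P" "f \<in> P" and he: "e \<cdot> a = e \<cdot> b" "f \<cdot> c = f \<cdot> d"
    using assms unfolding Rs_def by auto
  have paf: "pl S (a \<cdot> f) \<cdot> a = a \<cdot> f" using l4[of a f] h by simp
  have pbf: "pl S (b \<cdot> f) \<cdot> b = b \<cdot> f" using l4[of b f] h by simp
  have g: "e \<cdot> pl S (a \<cdot> f) = e \<cdot> pl S (b \<cdot> f)"
  proof -
    have "e \<cdot> pl S (a \<cdot> f) = pl S (e \<cdot> (a \<cdot> f))" using pl_Pmul[of "a \<cdot> f" e] h by simp
    also have "\<dots> = pl S ((e \<cdot> a) \<cdot> f)" using h by simp
    also have "\<dots> = pl S ((e \<cdot> b) \<cdot> f)" using he by (simp del: assoc)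
    also have "\<dots> = pl S (e \<cdot> (b \<cdot> f))" using h by simp
    also have "\<dots> = e \<cdot> pl S (b \<cdot> f)" using pl_Pmul[of "b \<cdot> f" e] h by simp
    finally show ?thesis .
  qed
  have "(e \<cdot> pl S (a \<cdot> f)) \<cdot> (a \<cdot> c) = e \<cdot> ((pl S (a \<cdot> f) \<cdot> a) \<cdot> c)" using h by simp
  also have "\<dots> = e \<cdot> ((a \<cdot> f) \<cdot> c)" using paf by simp
  also have "\<dots> = (e \<cdot> a) \<cdot> (f \<cdot> c)" using h by simp
  also have "\<dots> = (e \<cdot> b) \<cdot> (f \<cdot> d)" using he by (simp del: assoc)
  also have "\<dots> = e \<cdot> ((b \<cdot> f) \<cdot> d)" using h by simp
  also have "\<dots> = e \<cdot> ((pl S (b \<cdot> f) \<cdot> b) \<cdot> d)" using pbf by simp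
  also have "\<dots> = (e \<cdot> pl S (b \<cdot> f)) \<cdot> (b \<cdot> d)" using h by simp
  also have "\<dots> = (e \<cdot> pl S (a \<cdot> f)) \<cdot> (b \<cdot> d)" using g by simp
  finally have X: "(e \<cdot> pl S (a \<cdot> f)) \<cdot> (a \<cdot> c) = (e \<cdot> pl S (a \<cdot> f)) \<cdot> (b \<cdot> d)" .
  have "e \<cdot> pl S (a \<cdot> f) \<in> P" using h by simp
  then show ?thesis unfolding Rs_def using h X mul_C by blast
qed

lemma Rs_st: assumes "(a,b) \<in> Rs" shows "(st S a, st S b) \<in> Rs"
proof -
  obtain e where h: "a \<in> C" "b \<in> C" "e \<in> P" and he: "e \<cdot> a = e \<cdot> b"
    using assms unfolding Rs_def by auto
  have 1: "st S (e \<cdot> a) \<cdot> st S a = st S (e \<cdot> a)" using st_prod_le h by simp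
  have "st S (e \<cdot> b) \<cdot> st S b = st S (e \<cdot> b)" using st_prod_le h by simp
  hence 2: "st S (e \<cdot> a) \<cdot> st S b = st S (e \<cdot> a)" using he by simp
  have 3: "st S (e \<cdot> a) \<in> P" using h by simp
  have "st S (e \<cdot> a) \<cdot> st S a = st S (e \<cdot> a) \<cdot> st S b" using 1 2 by simp
  then show ?thesis unfolding Rs_def using h 3 st_C by blast
qed

lemma Rs_pl: assumes "(a,b) \<in> Rs" shows "(pl S a, pl S b) \<in> Rs"
proof -
  obtain e where h: "a \<in> C" "b \<in> C" "e \<in> P" "e \<cdot> a = e \<cdot> b"
    using assms unfolding Rs_def by auto
  have "e \<cdot> pl S a = e \<cdot> pl S b" using pl_Pmul h by metis
  then show ?thesis unfolding Rs_def using h by auto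
qed

lemma Rs_cong: "congruence S Rs"
  unfolding congruence_def using Rs_equiv Rs_mul Rs_st Rs_pl by blast

lemma Rs_least: assumes "congruence S R" "P \<times> P \<subseteq> R" shows "Rs \<subseteq> R"
proof safe
  fix a b assume "(a,b) \<in> Rs"
  then obtain e where h: "a \<in> C" "b \<in> C" "e \<in> P" "e \<cdot> a = e \<cdot> b"
    unfolding Rs_def by auto
  have eq: "equiv C R" and m: "\<And>a b c d. (a, b) \<in> R \<Longrightarrow> (c, d) \<in> R \<Longrightarrow> (a \<cdot> c, b \<cdot> d) \<in> R"
    using assms(1) unfolding congruence_def by auto
  have ra: "(a,a) \<in> R" "(b,b) \<in> R" using eq h unfolding equiv_def refl_on_def by auto
  have "(e \<cdot> a, pl S a \<cdot> a) \<in> R" using m[OF _ ra(1), of e "pl S a"] assms(2) h by auto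
  hence 1: "(e \<cdot> a, a) \<in> R" using l1 h by simp
  have "(e \<cdot> b, pl S b \<cdot> b) \<in> R" using m[OF _ ra(2), of e "pl S b"] assms(2) h by auto
  hence 2: "(e \<cdot> b, b) \<in> R" using l1 h by simp
  show "(a,b) \<in> R" using 1 2 h(4) eq unfolding equiv_def sym_def trans_def by metis
qed

lemma sigma_Rs: "sigma S = Rs"
  unfolding sigma_def using Rs_cong Rs_PP Rs_least by blast

lemma sigma_iff: "(a,b) \<in> sigma S \<longleftrightarrow> a \<in> C \<and> b \<in> C \<and> (\<exists>e\<in>P. e \<cdot> a = e \<cdot> b)"
  unfolding sigma_Rs Rs_def by simp

lemma sig_C: "(a,b) \<in> sigma S \<Longrightarrow> a \<in> C" "(a,b) \<in> sigma S \<Longrightarrow> b \<in> C"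
  by (auto simp: sigma_iff)
lemma sig_equiv: "equiv C (sigma S)" using Rs_equiv sigma_Rs by simp
lemma sig_refl: "a \<in> C \<Longrightarrow> (a,a) \<in> sigma S"
  using sig_equiv unfolding equiv_def refl_on_def by auto
lemma sig_sym: "(a,b) \<in> sigma S \<Longrightarrow> (b,a) \<in> sigma S"
  using sig_equiv unfolding equiv_def sym_def by auto
lemma sig_trans: "(a,b) \<in> sigma S \<Longrightarrow> (b,c) \<in> sigma S \<Longrightarrow> (a,c) \<in> sigma S"
  using sig_equiv unfolding equiv_def trans_def by blast
lemma sig_mul: "(a,b) \<in> sigma S \<Longrightarrow> (c,d) \<in> sigma S \<Longrightarrow> (a \<cdot> c, b \<cdot> d) \<in> sigma S"
  using Rs_mul sigma_Rs by simp
lemma sig_st: "(a,b) \<in> sigma S \<Longrightarrow> (st S a, st S b) \<in> sigma S"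
  using Rs_st sigma_Rs by simp
lemma sig_pl: "(a,b) \<in> sigma S \<Longrightarrow> (pl S a, pl S b) \<in> sigma S"
  using Rs_pl sigma_Rs by simp
lemma sig_P: "e \<in> P \<Longrightarrow> f \<in> P \<Longrightarrow> (e,f) \<in> sigma S"
  using Rs_PP sigma_Rs by auto
lemma sig_st_self: "a \<in> C \<Longrightarrow> (a, a \<cdot> st S a) \<in> sigma S" using r1 sig_refl by simp
lemma sig_mulP: "a \<in> C \<Longrightarrow> e \<in> P \<Longrightarrow> (a \<cdot> e, a) \<in> sigma S"
  using sig_mul[OF sig_refl[of a] sig_P[of e "st S a"]] r1 by simp
lemma sig_Pmul: "a \<in> C \<Longrightarrow> e \<in> P \<Longrightarrow> (e \<cdot> a, a) \<in> sigma S"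
  using sig_mul[OF sig_P[of e "pl S a"] sig_refl[of a]] l1 by simp

end

locale prs = rs + assumes prp: "proper S"
begin

lemma prop_st: "a \<in> C \<Longrightarrow> b \<in> C \<Longrightarrow> st S a = st S b \<Longrightarrow> (a,b) \<in> sigma S \<Longrightarrow> a = b"
  using prp unfolding proper_def by blast
lemma prop_pl: "a \<in> C \<Longrightarrow> b \<in> C \<Longrightarrow> pl S a = pl S b \<Longrightarrow> (a,b) \<in> sigma S \<Longrightarrow> a = b"
  using prp unfolding proper_def by blast

lemma compat_st: assumes "(a,b) \<in> sigma S" shows "a \<cdot> st S b = b \<cdot> st S a"
proof -
  have h: "a \<in> C" "b \<in> C" using assms sig_C by auto
  have "(a \<cdot> st S b, b \<cdot> st S a) \<in> sigma S" using sig_mul[OF assms sig_P[of "st S b" "st S a"]] h by simp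
  moreover have "st S (a \<cdot> st S b) = st S (b \<cdot> st S a)" using h r3 P_comm by simp
  ultimately show ?thesis using prop_st h by simp
qed

lemma compat_pl: assumes "(a,b) \<in> sigma S" shows "pl S a \<cdot> b = pl S b \<cdot> a"
proof -
  have h: "a \<in> C" "b \<in> C" using assms sig_C by auto
  have "(pl S a \<cdot> b, pl S b \<cdot> a) \<in> sigma S" using sig_mul[OF sig_P[of "pl S a" "pl S b"] sig_sym[OF assms]] h by simp
  moreover have "pl S (pl S a \<cdot> b) = pl S (pl S b \<cdot> a)" using h l3 P_comm by simp
  ultimately show ?thesis using prop_pl h by simp
qed

abbreviation T where "T \<equiv> sigma_classes S"
abbreviation cls where "cls a \<equiv> sigma S `` {a}"

lemma T_def': "T = C // sigma S" unfolding sigma_classes_def by simp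
lemma cls_T: "a \<in> C \<Longrightarrow> cls a \<in> T" unfolding T_def' by (rule quotientI)
lemma in_cls: "a \<in> C \<Longrightarrow> a \<in> cls a" using sig_refl by simp
lemma cls_iff: "b \<in> cls a \<longleftrightarrow> (a,b) \<in> sigma S" by simp
lemma T_E: "t \<in> T \<Longrightarrow> (\<And>a. a \<in> C \<Longrightarrow> t = cls a \<Longrightarrow> thesis) \<Longrightarrow> thesis"
  unfolding T_def' by (rule quotientE)
lemma cls_eq: "a \<in> C \<Longrightarrow> b \<in> C \<Longrightarrow> cls a = cls b \<longleftrightarrow> (a,b) \<in> sigma S"
  using equiv_class_eq_iff[OF sig_equiv] by blast
lemma T_sub: assumes "t \<in> T" "a \<in> t" shows "a \<in> C"
proof -
  obtain x where "x \<in> C" "t = cls x" using assms(1) by (rule T_E)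
  thus ?thesis using assms sig_C by auto
qed
lemma same_class: assumes "t \<in> T" "a \<in> t" "b \<in> t" shows "(a,b) \<in> sigma S"
proof -
  obtain x where "x \<in> C" "t = cls x" using assms(1) by (rule T_E)
  hence "(x,a) \<in> sigma S" "(x,b) \<in> sigma S" using assms by auto
  thus ?thesis using sig_sym sig_trans by blast
qed
lemma T_cls: assumes "t \<in> T" "a \<in> t" shows "t = cls a"
proof -
  obtain x where x: "x \<in> C" "t = cls x" using assms(1) by (rule T_E)
  hence "(x,a) \<in> sigma S" using assms by auto
  thus ?thesis using x cls_eq sig_C by blast
qed

lemma lpa_eq: assumes "t \<in> T" "e \<in> P" "a \<in> t" "e = e \<cdot> st S a"
  shows "lpa S t e = pl S (a \<cdot> e)"
proof -
  define c where "c = (SOME a. a \<in> t \<and> proj_le S e (st S a))"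
  have "\<exists>a. a \<in> t \<and> proj_le S e (st S a)" using assms unfolding proj_le_def by blast
  from someI_ex[OF this] have c: "c \<in> t" "e = e \<cdot> st S c" unfolding c_def proj_le_def by auto
  have aC: "a \<in> C" "c \<in> C" using T_sub assms c by auto
  have "(c \<cdot> e, a \<cdot> e) \<in> sigma S" using sig_mul[OF same_class[OF assms(1) c(1) assms(3)] sig_refl[of e]] assms by simp
  moreover have "st S (c \<cdot> e) = e" using st_mulP[of c e] aC assms c P_comm by simp
  moreover have "st S (a \<cdot> e) = e" using st_mulP[of a e] aC assms c P_comm by simp
  ultimately have "c \<cdot> e = a \<cdot> e" using prop_st aC assms by simp
  thus ?thesis unfolding lpa_def c_def by simp
qed

end

locale plt = prs + assumes lat: "left_action_total S"
begin

lemma lpa_ex: "t \<in> T \<Longrightarrow> e \<in> P \<Longrightarrow> \<exists>a\<in>t. e = e \<cdot> st S a"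
  using lat unfolding left_action_total_def lpa_defined_def proj_le_def by blast

lemma lpa_cls: "a \<in> C \<Longrightarrow> e \<in> P \<Longrightarrow> e = e \<cdot> st S a \<Longrightarrow> lpa S (cls a) e = pl S (a \<cdot> e)"
  using lpa_eq cls_T in_cls by blast

lemma lpa_P: assumes "t \<in> T" "e \<in> P" shows "lpa S t e \<in> P"
proof -
  obtain a where "a \<in> t" "e = e \<cdot> st S a" using lpa_ex assms by blast
  thus ?thesis using lpa_eq assms T_sub by simp
qed

lemma lpa_self: "a \<in> C \<Longrightarrow> lpa S (cls a) (st S a) = pl S a"
  using lpa_cls[of a "st S a"] r1 by simp

lemma lpa_inj: assumes "t \<in> T" "y \<in> P" "z \<in> P" "lpa S t y = lpa S t z" shows "y = z"
proof -
  obtain a where a: "a \<in> t" "y = y \<cdot> st S a" using lpa_ex assms by blast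
  obtain a' where a': "a' \<in> t" "z = z \<cdot> st S a'" using lpa_ex assms by blast
  have aC: "a \<in> C" "a' \<in> C" using a a' T_sub assms by auto
  have "pl S (a \<cdot> y) = lpa S t y" using lpa_eq assms a by simp
  also have "\<dots> = lpa S t z" by (rule assms(4))
  also have "\<dots> = pl S (a' \<cdot> z)" using lpa_eq assms a' by simp
  finally have "pl S (a \<cdot> y) = pl S (a' \<cdot> z)" .
  moreover have "(a \<cdot> y, a' \<cdot> z) \<in> sigma S" using sig_mul[OF same_class[OF assms(1) a(1) a'(1)] sig_P[of y z]] assms by simp
  ultimately have eq: "a \<cdot> y = a' \<cdot> z" using prop_pl aC assms by simp
  have "st S (a \<cdot> y) = y" using st_mulP[of a y] P_comm[of "st S a" y] aC a assms by simp
  moreover have "st S (a' \<cdot> z) = z" using st_mulP[of a' z] P_comm[of "st S a'" z] aC a' assms by simp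
  ultimately show ?thesis using eq by simp
qed

end

context plt begin

lemma lpa_meet: assumes t: "t \<in> T" and yz: "y \<in> P" "z \<in> P"
  shows "lpa S t (y \<cdot> z) = lpa S t y \<cdot> lpa S t z"
proof -
  obtain a where a: "a \<in> t" "y = y \<cdot> st S a" using lpa_ex t yz by blast
  obtain a' where a': "a' \<in> t" "z = z \<cdot> st S a'" using lpa_ex t yz by blast
  have aC: "a \<in> C" "a' \<in> C" using a a' T_sub t by auto
  have sa: "(a, a') \<in> sigma S" using same_class t a a' by blast
  have yzP: "y \<cdot> z \<in> P" using yz by simp
  have h1: "y \<cdot> z = (y \<cdot> z) \<cdot> st S a"
  proof -
    have "(y \<cdot> z) \<cdot> st S a = y \<cdot> (z \<cdot> st S a)" using yz aC by simp
    also have "\<dots> = y \<cdot> (st S a \<cdot> z)" using P_comm[of z "st S a"] yz aC by simp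
    also have "\<dots> = (y \<cdot> st S a) \<cdot> z" using yz aC by simp
    also have "\<dots> = y \<cdot> z" using a(2) by simp
    finally show ?thesis by simp
  qed
  have h2: "y \<cdot> z = (y \<cdot> z) \<cdot> st S a'"
  proof -
    have "(y \<cdot> z) \<cdot> st S a' = y \<cdot> (z \<cdot> st S a')" using yz aC by simp
    also have "\<dots> = y \<cdot> z" using a'(2) by simp
    finally show ?thesis by simp
  qed
  define q where "q = lpa S t (y \<cdot> z)"
  have q1: "q = pl S (a \<cdot> (y \<cdot> z))" unfolding q_def using lpa_eq t yzP a(1) h1 by simp
  have q2: "q = pl S (a' \<cdot> (y \<cdot> z))" unfolding q_def using lpa_eq t yzP a'(1) h2 by simp
  have ty: "lpa S t y = pl S (a \<cdot> y)" using lpa_eq t yz a by simp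
  have tz: "lpa S t z = pl S (a' \<cdot> z)" using lpa_eq t yz a' by simp
  define p where "p = pl S (a \<cdot> y) \<cdot> pl S (a' \<cdot> z)"
  have pP: "p \<in> P" unfolding p_def using aC yz by simp
  have i: "pl S (a \<cdot> y) \<cdot> q = q"
    using pl_prod_le[of "a \<cdot> y" z] aC yz q1 by simp
  have ii: "pl S (a' \<cdot> z) \<cdot> q = q"
  proof -
    have "pl S (a' \<cdot> z) \<cdot> pl S ((a' \<cdot> z) \<cdot> y) = pl S ((a' \<cdot> z) \<cdot> y)"
      using pl_prod_le[of "a' \<cdot> z" y] aC yz by simp
    moreover have "(a' \<cdot> z) \<cdot> y = a' \<cdot> (y \<cdot> z)" using P_comm[of z y] aC yz by simp
    ultimately show ?thesis using q2 by simp
  qed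
  have pq: "p \<cdot> q = q"
  proof -
    have "p \<cdot> q = pl S (a \<cdot> y) \<cdot> (pl S (a' \<cdot> z) \<cdot> q)" unfolding p_def using aC yz q1 by simp
    also have "\<dots> = q" using i ii by simp
    finally show ?thesis .
  qed
  define w where "w = p \<cdot> (a \<cdot> y)"
  define w' where "w' = p \<cdot> (a' \<cdot> z)"
  have wC: "w \<in> C" "w' \<in> C" unfolding w_def w'_def using pP aC yz by auto
  have "(w, w') \<in> sigma S" unfolding w_def w'_def
    using sig_mul[OF sig_refl[of p] sig_mul[OF sa sig_P[of y z]]] pP yz by simp
  moreover have "pl S w = p" unfolding w_def
  proof -
    have "pl S (p \<cdot> (a \<cdot> y)) = p \<cdot> pl S (a \<cdot> y)" using pl_Pmul pP aC yz by simp
    also have "\<dots> = pl S (a \<cdot> y) \<cdot> (pl S (a' \<cdot> z) \<cdot> pl S (a \<cdot> y))" unfolding p_def using aC yz by simp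
    also have "\<dots> = pl S (a \<cdot> y) \<cdot> (pl S (a \<cdot> y) \<cdot> pl S (a' \<cdot> z))" using P_comm[of "pl S (a' \<cdot> z)" "pl S (a \<cdot> y)"] aC yz by simp
    also have "\<dots> = p" unfolding p_def using P_lidem aC yz by simp
    finally show "pl S (p \<cdot> (a \<cdot> y)) = p" .
  qed
  moreover have "pl S w' = p" unfolding w'_def
  proof -
    have "pl S (p \<cdot> (a' \<cdot> z)) = p \<cdot> pl S (a' \<cdot> z)" using pl_Pmul pP aC yz by simp
    also have "\<dots> = p" unfolding p_def using aC yz by simp
    finally show "pl S (p \<cdot> (a' \<cdot> z)) = p" .
  qed
  ultimately have ww: "w = w'" using prop_pl wC by simp
  have sw1: "st S w \<cdot> y = st S w"
    using st_prod_le[of "p \<cdot> a" y] pP aC yz unfolding w_def by simp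
  have sw2: "st S w' \<cdot> z = st S w'"
    using st_prod_le[of "p \<cdot> a'" z] pP aC yz unfolding w'_def by simp
  have swyz: "st S w \<cdot> (y \<cdot> z) = st S w"
  proof -
    have "st S w \<cdot> (y \<cdot> z) = (st S w \<cdot> y) \<cdot> z" using wC yz by simp
    also have "\<dots> = st S w' \<cdot> z" using sw1 ww by simp
    also have "\<dots> = st S w" using sw2 ww by simp
    finally show ?thesis .
  qed
  have "w = w \<cdot> (y \<cdot> z)"
  proof -
    have "w = w \<cdot> st S w" using r1 wC by simp
    also have "\<dots> = w \<cdot> (st S w \<cdot> (y \<cdot> z))" using swyz by simp
    also have "\<dots> = (w \<cdot> st S w) \<cdot> (y \<cdot> z)" using wC yz by simp
    also have "\<dots> = w \<cdot> (y \<cdot> z)" using r1 wC by simp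
    finally show ?thesis .
  qed
  also have "\<dots> = p \<cdot> (a \<cdot> (y \<cdot> z))" unfolding w_def using pP aC yz P_lidem by simp
  finally have "pl S w = pl S (p \<cdot> (a \<cdot> (y \<cdot> z)))" by simp
  also have "\<dots> = p \<cdot> q" using pl_Pmul pP aC yz q1 by simp
  finally have "p = q" using \<open>pl S w = p\<close> pq by simp
  thus ?thesis unfolding q_def p_def ty tz by simp
qed

lemma lpa_le: assumes "t \<in> T" "y \<in> P" "z \<in> P"
  shows "y \<cdot> z = y \<longleftrightarrow> lpa S t y \<cdot> lpa S t z = lpa S t y"
proof
  assume "y \<cdot> z = y" thus "lpa S t y \<cdot> lpa S t z = lpa S t y" using lpa_meet assms by metis
next
  assume "lpa S t y \<cdot> lpa S t z = lpa S t y"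
  hence "lpa S t (y \<cdot> z) = lpa S t y" using lpa_meet assms by simp
  thus "y \<cdot> z = y" using lpa_inj assms by simp
qed

lemma lpa_ideal: assumes t: "t \<in> T" and yz: "y \<in> P" "z \<in> P" and h: "z \<cdot> lpa S t y = z"
  shows "\<exists>w\<in>P. z = lpa S t w"
proof -
  obtain a where a: "a \<in> t" "y = y \<cdot> st S a" using lpa_ex t yz by blast
  have aC: "a \<in> C" using a T_sub t by auto
  have ty: "lpa S t y = pl S (a \<cdot> y)" using lpa_eq t yz a by simp
  define x where "x = z \<cdot> (a \<cdot> y)"
  define w where "w = st S x"
  have xC: "x \<in> C" unfolding x_def using aC yz by simp
  have wP: "w \<in> P" unfolding w_def using xC by simp
  have wy: "w \<cdot> y = w" unfolding w_def x_def using st_prod_le[of "z \<cdot> a" y] aC yz by simp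
  have wa: "w = w \<cdot> st S a"
  proof -
    have "w \<cdot> st S a = (w \<cdot> y) \<cdot> st S a" using wy by simp
    also have "\<dots> = w \<cdot> (y \<cdot> st S a)" using wP yz aC by simp
    also have "\<dots> = w" using a(2) wy by simp
    finally show ?thesis by simp
  qed
  have "(x, a \<cdot> y) \<in> sigma S" unfolding x_def using sig_Pmul aC yz by simp
  hence "(x, a) \<in> sigma S" using sig_mulP[of a y] aC yz sig_trans by blast
  hence "(x \<cdot> w, a \<cdot> w) \<in> sigma S" using sig_mul sig_refl wP by blast
  hence s: "(x, a \<cdot> w) \<in> sigma S" unfolding w_def using r1 xC by simp
  have "st S (a \<cdot> w) = w"
    using st_mulP[of a w] P_comm[of "st S a" w] aC wP wa by simp
  hence "x = a \<cdot> w" using prop_st[OF xC _ _ s] aC wP unfolding w_def by simp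
  hence "lpa S t w = pl S x" using lpa_eq t wP a(1) wa by simp
  also have "\<dots> = z" unfolding x_def using pl_Pmul[of "a \<cdot> y" z] aC yz h ty by simp
  finally show ?thesis using wP by auto
qed

lemma lpa_unit: assumes "e0 \<in> P" "e \<in> P" shows "lpa S (cls e0) e = e"
proof -
  have "cls e0 = cls e" using cls_eq sig_P assms by simp
  thus ?thesis using lpa_cls[of e e] assms by simp
qed

lemma lpa_comp: assumes "a \<in> C" "b \<in> C" "e \<in> P"
  shows "lpa S (cls (a \<cdot> b)) e = lpa S (cls a) (lpa S (cls b) e)"
proof -
  obtain b' where b': "b' \<in> cls b" "e = e \<cdot> st S b'" using lpa_ex cls_T assms by blast
  have bC: "b' \<in> C" using b' sig_C by auto
  define f where "f = pl S (b' \<cdot> e)"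
  have fP: "f \<in> P" unfolding f_def using bC assms by simp
  have tf: "lpa S (cls b) e = f" unfolding f_def using lpa_eq cls_T assms b' by simp
  obtain a' where a': "a' \<in> cls a" "f = f \<cdot> st S a'" using lpa_ex cls_T assms fP by blast
  have aC: "a' \<in> C" using a' sig_C by auto
  have ta: "lpa S (cls a) f = pl S (a' \<cdot> (b' \<cdot> e))"
    using lpa_eq[OF cls_T[OF assms(1)] fP a'(1) a'(2)] pl_mul_pl[of a' "b' \<cdot> e"] aC bC assms
    unfolding f_def by simp
  have "(a \<cdot> b, a' \<cdot> b') \<in> sigma S" using sig_mul a' b' by simp
  hence ceq: "cls (a \<cdot> b) = cls (a' \<cdot> b')" using cls_eq aC bC assms by simp
  have "st S a' \<cdot> f = f" using a'(2) P_comm[of f "st S a'"] fP aC by simp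
  hence "st S a' \<cdot> (b' \<cdot> e) = b' \<cdot> e" using pl_in[of "b' \<cdot> e" "st S a'"] aC bC assms unfolding f_def by simp
  hence "b' \<cdot> e = (b' \<cdot> e) \<cdot> st S (a' \<cdot> (b' \<cdot> e))" using r4[of a' "b' \<cdot> e"] aC bC assms by simp
  hence "st S (b' \<cdot> e) = st S ((b' \<cdot> e) \<cdot> st S (a' \<cdot> (b' \<cdot> e)))" by simp
  also have "\<dots> = st S (b' \<cdot> e) \<cdot> st S (a' \<cdot> (b' \<cdot> e))" using r3[of "b' \<cdot> e" "a' \<cdot> (b' \<cdot> e)"] aC bC assms by (simp del: assoc)
  finally have 1: "st S (b' \<cdot> e) = st S (b' \<cdot> e) \<cdot> st S (a' \<cdot> (b' \<cdot> e))" .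
  have 2: "st S (b' \<cdot> e) = e" using st_mulP[of b' e] P_comm[of "st S b'" e] b' bC assms by simp
  have 3: "st S (a' \<cdot> (b' \<cdot> e)) = st S (a' \<cdot> b') \<cdot> e" using st_mulP[of "a' \<cdot> b'" e] aC bC assms by simp
  have "e = e \<cdot> (st S (a' \<cdot> b') \<cdot> e)" using 1 2 3 by simp
  also have "\<dots> = st S (a' \<cdot> b') \<cdot> (e \<cdot> e)" using P_lcomm[of e "st S (a' \<cdot> b')" e] aC bC assms by simp
  also have "\<dots> = e \<cdot> st S (a' \<cdot> b')" using P_comm[of e "st S (a' \<cdot> b')"] aC bC assms by simp
  finally have e_le: "e = e \<cdot> st S (a' \<cdot> b')" .
  have "lpa S (cls (a' \<cdot> b')) e = pl S ((a' \<cdot> b') \<cdot> e)" using lpa_cls e_le aC bC assms by simp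
  thus ?thesis using ceq ta tf aC bC assms by simp
qed

end

context plt begin

definition rep where "rep t = (SOME a. a \<in> t)"
definition tmS where "tmS t s = cls (rep t \<cdot> rep s)"
definition e0 where "e0 = st S (SOME a. a \<in> C)"
definition uS where "uS = cls e0"
definition phi where "phi a = (pl S a, cls a)"

lemma rep_cls: "a \<in> C \<Longrightarrow> (a, rep (cls a)) \<in> sigma S"
proof -
  assume "a \<in> C"
  hence "\<exists>x. x \<in> cls a" using in_cls by blast
  hence "rep (cls a) \<in> cls a" unfolding rep_def by (rule someI_ex)
  thus ?thesis by simp
qed

lemma rep_C: "a \<in> C \<Longrightarrow> rep (cls a) \<in> C" using rep_cls sig_C by blast

lemma tm_cls: "a \<in> C \<Longrightarrow> b \<in> C \<Longrightarrow> tmS (cls a) (cls b) = cls (a \<cdot> b)"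
  unfolding tmS_def using cls_eq[of "rep (cls a) \<cdot> rep (cls b)" "a \<cdot> b"] rep_C
    sig_mul[OF rep_cls[of a] rep_cls[of b]] sig_sym by simp

lemma e0P: "C \<noteq> {} \<Longrightarrow> e0 \<in> P"
  unfolding e0_def by (simp add: some_in_eq)

lemma cls_P: "C \<noteq> {} \<Longrightarrow> e \<in> P \<Longrightarrow> cls e = uS"
  unfolding uS_def using cls_eq sig_P e0P by simp

lemma W_data_S: assumes ne: "C \<noteq> {}" shows "W_data T tmS uS P (mul S) (lpa S)"
  unfolding W_data_def
proof (intro conjI ballI)
  have eP: "e0 \<in> P" using e0P ne .
  show "uS \<in> T" unfolding uS_def using eP cls_T by simp
  fix t s assume t: "t \<in> T" and s: "s \<in> T"
  obtain a where a: "a \<in> C" "t = cls a" using t by (rule T_E)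
  obtain b where b: "b \<in> C" "s = cls b" using s by (rule T_E)
  show "tmS t s \<in> T" using a b tm_cls cls_T by simp
  fix r assume r: "r \<in> T"
  obtain c where c: "c \<in> C" "r = cls c" using r by (rule T_E)
  show "tmS (tmS t s) r = tmS t (tmS s r)" using a b c tm_cls by simp
next
  fix t assume t: "t \<in> T"
  obtain a where a: "a \<in> C" "t = cls a" using t by (rule T_E)
  have eP: "e0 \<in> P" using e0P ne .
  have "(e0 \<cdot> a, a) \<in> sigma S" using sig_Pmul a eP by simp
  moreover have "(a \<cdot> e0, a) \<in> sigma S" using sig_mulP a eP by simp
  ultimately have "tmS uS t = t \<and> tmS t uS = t" unfolding uS_def
    using a tm_cls cls_eq eP by simp
  thus "tmS uS t = t" by simp
  show "tmS t uS = t" using \<open>tmS uS t = t \<and> tmS t uS = t\<close> by simp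
next
  fix x y assume "x \<in> P" "y \<in> P" thus "x \<cdot> y \<in> P" by simp
next
  fix x y z assume "x \<in> P" "y \<in> P" "z \<in> P" thus "(x \<cdot> y) \<cdot> z = x \<cdot> (y \<cdot> z)" by simp
next
  fix x y assume "x \<in> P" "y \<in> P" thus "x \<cdot> y = y \<cdot> x" by (rule P_comm)
next
  fix x assume "x \<in> P" thus "x \<cdot> x = x" by simp
next
  fix t y assume "t \<in> T" "y \<in> P" thus "lpa S t y \<in> P" by (rule lpa_P)
next
  fix y assume "y \<in> P" thus "lpa S uS y = y" unfolding uS_def using lpa_unit e0P ne by simp
next
  fix t s y assume t: "t \<in> T" and s: "s \<in> T" and y: "y \<in> P"
  obtain a where a: "a \<in> C" "t = cls a" using t by (rule T_E)
  obtain b where b: "b \<in> C" "s = cls b" using s by (rule T_E)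
  show "lpa S (tmS t s) y = lpa S t (lpa S s y)" using lpa_comp a b tm_cls y by simp
next
  fix t y z assume "t \<in> T" "y \<in> P" "z \<in> P"
  thus "(y \<cdot> z = y) = (lpa S t y \<cdot> lpa S t z = lpa S t y)" by (rule lpa_le)
next
  fix t y z assume "t \<in> T" "y \<in> P" "z \<in> P"
  thus "z \<cdot> lpa S t y = z \<longrightarrow> z \<in> lpa S t ` P" using lpa_ideal by blast
qed

lemma phi_mul: assumes a: "a \<in> C" and b: "b \<in> C"
  shows "pl S a \<cdot> lpa S (cls a) (pl S b) = pl S (a \<cdot> b)"
proof -
  obtain a' where a': "a' \<in> cls a" "pl S b = pl S b \<cdot> st S a'" using lpa_ex cls_T a b pl_P by blast
  have aC: "a' \<in> C" using a' sig_C by auto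
  have sa: "(a, a') \<in> sigma S" using a' by simp
  have lp: "lpa S (cls a) (pl S b) = pl S (a' \<cdot> pl S b)" using lpa_cls lpa_eq cls_T a b a' by simp
  have c1: "a \<cdot> st S a' = a' \<cdot> st S a" by (rule compat_st[OF sa])
  have c2: "pl S a \<cdot> a' = pl S a' \<cdot> a" by (rule compat_pl[OF sa])
  have sb: "st S a' \<cdot> pl S b = pl S b" using a'(2) P_comm[of "pl S b" "st S a'"] aC b by simp
  have X: "a \<cdot> pl S b = a' \<cdot> (st S a \<cdot> pl S b)"
  proof -
    have "a \<cdot> pl S b = a \<cdot> (st S a' \<cdot> pl S b)" using sb by simp
    also have "\<dots> = (a \<cdot> st S a') \<cdot> pl S b" using a aC b by simp
    also have "\<dots> = (a' \<cdot> st S a) \<cdot> pl S b" using c1 by simp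
    also have "\<dots> = a' \<cdot> (st S a \<cdot> pl S b)" using a aC b by simp
    finally show ?thesis .
  qed
  have "pl S a \<cdot> pl S (a' \<cdot> pl S b) = pl S (pl S a \<cdot> (a' \<cdot> pl S b))" using l3[of a "a' \<cdot> pl S b"] a aC b by simp
  also have "\<dots> = pl S ((pl S a \<cdot> a') \<cdot> pl S b)" using a aC b by simp
  also have "\<dots> = pl S ((pl S a' \<cdot> a) \<cdot> pl S b)" using c2 by simp
  also have "\<dots> = pl S (pl S a' \<cdot> (a \<cdot> pl S b))" using a aC b by simp
  also have "\<dots> = pl S a' \<cdot> pl S (a \<cdot> pl S b)" using l3[of a' "a \<cdot> pl S b"] a aC b by simp
  also have "\<dots> = pl S a' \<cdot> pl S (a' \<cdot> (st S a \<cdot> pl S b))" using X by simp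
  also have "\<dots> = pl S (a' \<cdot> (st S a \<cdot> pl S b))" using pl_prod_le[of a' "st S a \<cdot> pl S b"] a aC b by simp
  also have "\<dots> = pl S (a \<cdot> pl S b)" using X by simp
  also have "\<dots> = pl S (a \<cdot> b)" using pl_mul_pl a b by simp
  finally show ?thesis using lp by simp
qed

lemma iso_S: assumes ne: "C \<noteq> {}" shows "isomorphic S (W_alg T tmS uS P (mul S) (lpa S))"
  unfolding isomorphic_def
proof (intro exI[of _ phi] conjI ballI)
  show "bij_betw phi C (carr (W_alg T tmS uS P (mul S) (lpa S)))"
    unfolding bij_betw_def W_alg_def
  proof (intro conjI)
    show "inj_on phi C" unfolding inj_on_def phi_def
      using prop_pl cls_eq by auto
    show "phi ` C = carr \<lparr>carr = {(lpa S t y, t) |y t. y \<in> P \<and> t \<in> T},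
         mul = \<lambda>(a, t) (b, s). (a \<cdot> lpa S t b, tmS t s),
         st = \<lambda>(a, t). (THE y. y \<in> P \<and> lpa S t y = a, uS), pl = \<lambda>(a, t). (a, uS)\<rparr>"
    proof (simp, intro equalityI subsetI)
      fix x assume "x \<in> phi ` C"
      then obtain a where a: "a \<in> C" "x = phi a" by blast
      hence "x = (lpa S (cls a) (st S a), cls a)" unfolding phi_def using lpa_self by simp
      thus "x \<in> {(lpa S t y, t) |y t. y \<in> P \<and> t \<in> T}" using a cls_T by blast
    next
      fix x assume "x \<in> {(lpa S t y, t) |y t. y \<in> P \<and> t \<in> T}"
      then obtain y t where yt: "y \<in> P" "t \<in> T" "x = (lpa S t y, t)" by blast
      obtain b where b: "b \<in> t" "y = y \<cdot> st S b" using lpa_ex yt by blast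
      have bC: "b \<in> C" using b T_sub yt by blast
      have "t = cls b" using T_cls yt b by blast
      also have "\<dots> = cls (b \<cdot> y)" using cls_eq sig_mulP bC yt sig_sym by simp
      finally have 1: "t = cls (b \<cdot> y)" .
      have "lpa S t y = pl S (b \<cdot> y)" using lpa_eq yt b by simp
      hence "x = phi (b \<cdot> y)" unfolding phi_def using 1 yt by simp
      thus "x \<in> phi ` C" using bC yt by simp
    qed
  qed
next
  fix x y assume x: "x \<in> C" and y: "y \<in> C"
  show "phi (x \<cdot> y) = mul (W_alg T tmS uS P (mul S) (lpa S)) (phi x) (phi y)"
    unfolding W_alg_def phi_def using phi_mul x y tm_cls by simp
next
  fix x assume x: "x \<in> C"
  have "(THE y. y \<in> P \<and> lpa S (cls x) y = pl S x) = st S x"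
  proof (rule the_equality)
    show "st S x \<in> P \<and> lpa S (cls x) (st S x) = pl S x" using x lpa_self by simp
    fix y assume "y \<in> P \<and> lpa S (cls x) y = pl S x"
    thus "y = st S x" using lpa_inj[of "cls x" y "st S x"] lpa_self x cls_T by simp
  qed
  thus "phi (st S x) = st (W_alg T tmS uS P (mul S) (lpa S)) (phi x)"
    unfolding W_alg_def phi_def using cls_P[OF ne] x by simp
  show "phi (pl S x) = pl (W_alg T tmS uS P (mul S) (lpa S)) (phi x)"
    unfolding W_alg_def phi_def using cls_P[OF ne] x by simp
qed

end

locale wiso = rs S for S :: "('a, 'b) r_alg_scheme" +
  fixes T :: "'t set" and tm u and Y :: "'y set" and meet act and f :: "'a \<Rightarrow> 'y \<times> 't"
  assumes wd: "W_data T tm u Y meet act"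
    and fbij: "bij_betw f (carr S) (carr (W_alg T tm u Y meet act))"
    and fmul: "\<And>x y. x \<in> carr S \<Longrightarrow> y \<in> carr S \<Longrightarrow> f (mul S x y) = mul (W_alg T tm u Y meet act) (f x) (f y)"
    and fst': "\<And>x. x \<in> carr S \<Longrightarrow> f (st S x) = st (W_alg T tm u Y meet act) (f x)"
    and fpl: "\<And>x. x \<in> carr S \<Longrightarrow> f (pl S x) = pl (W_alg T tm u Y meet act) (f x)"
begin

abbreviation Wa where "Wa \<equiv> W_alg T tm u Y meet act"

lemma wdc1: "u \<in> T"
  using wd unfolding W_data_def by (elim conjE) assumption
lemma wdc2: "\<forall>t\<in>T. \<forall>s\<in>T. tm t s \<in> T"
  using wd unfolding W_data_def by (elim conjE) assumption
lemma wdc3: "\<forall>t\<in>T. tm u t = t \<and> tm t u = t"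
  using wd unfolding W_data_def by (elim conjE) assumption
lemma wdc4: "\<forall>x\<in>Y. \<forall>y\<in>Y. meet x y \<in> Y"
  using wd unfolding W_data_def by (elim conjE) assumption
lemma wdc5: "\<forall>x\<in>Y. \<forall>y\<in>Y. \<forall>z\<in>Y. meet (meet x y) z = meet x (meet y z)"
  using wd unfolding W_data_def by (elim conjE) assumption
lemma wdc6: "\<forall>x\<in>Y. \<forall>y\<in>Y. meet x y = meet y x"
  using wd unfolding W_data_def by (elim conjE) assumption
lemma wdc7: "\<forall>x\<in>Y. meet x x = x"
  using wd unfolding W_data_def by (elim conjE) assumption
lemma wdc8: "\<forall>t\<in>T. \<forall>y\<in>Y. act t y \<in> Y"
  using wd unfolding W_data_def by (elim conjE) assumption
lemma wdc9: "\<forall>y\<in>Y. act u y = y"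
  using wd unfolding W_data_def by (elim conjE) assumption
lemma wdc10: "\<forall>t\<in>T. \<forall>y\<in>Y. \<forall>z\<in>Y. meet y z = y \<longleftrightarrow> meet (act t y) (act t z) = act t y"
  using wd unfolding W_data_def by (elim conjE) assumption
lemmas wdc = wdc1 wdc2 wdc3 wdc4 wdc5 wdc6 wdc7 wdc8 wdc9 wdc10

lemma uT: "u \<in> T" by (rule wdc(1))
lemma tmT: "t \<in> T \<Longrightarrow> s \<in> T \<Longrightarrow> tm t s \<in> T" using wdc(2) by blast
lemma tm_u1: "t \<in> T \<Longrightarrow> tm u t = t" using wdc(3) by blast
lemma tm_u2: "t \<in> T \<Longrightarrow> tm t u = t" using wdc(3) by blast
lemmas tm_u = tm_u1 tm_u2
lemma meetY: "x \<in> Y \<Longrightarrow> y \<in> Y \<Longrightarrow> meet x y \<in> Y" using wdc(4) by blast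
lemma meet_assoc: "x \<in> Y \<Longrightarrow> y \<in> Y \<Longrightarrow> z \<in> Y \<Longrightarrow> meet (meet x y) z = meet x (meet y z)" using wdc(5) by blast
lemma meet_comm: "x \<in> Y \<Longrightarrow> y \<in> Y \<Longrightarrow> meet x y = meet y x" using wdc(6) by blast
lemma meet_idem: "x \<in> Y \<Longrightarrow> meet x x = x" using wdc(7) by blast
lemma actY: "t \<in> T \<Longrightarrow> y \<in> Y \<Longrightarrow> act t y \<in> Y" using wdc(8) by blast
lemma act_u: "y \<in> Y \<Longrightarrow> act u y = y" using wdc(9) by blast
lemma act_ord: "t \<in> T \<Longrightarrow> y \<in> Y \<Longrightarrow> z \<in> Y \<Longrightarrow> meet y z = y \<longleftrightarrow> meet (act t y) (act t z) = act t y"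
  by (rule wdc10[THEN bspec, THEN bspec, THEN bspec])

lemma act_inj: assumes "t \<in> T" "y \<in> Y" "z \<in> Y" "act t y = act t z" shows "y = z"
proof -
  have "meet (act t y) (act t z) = act t y" using assms meet_idem actY by simp
  hence "meet y z = y" using act_ord[of t y z] assms by blast
  have "meet (act t z) (act t y) = act t z" using assms meet_idem actY by simp
  hence "meet z y = z" using act_ord[of t z y] assms by blast
  note this \<open>meet y z = y\<close>
  thus ?thesis using meet_comm[of y z] assms by simp
qed

lemma carrW: "carr Wa = {(act t y, t) |y t. y \<in> Y \<and> t \<in> T}" unfolding W_alg_def by simp
lemma mulW: "mul Wa (c, t) (c', s) = (meet c (act t c'), tm t s)" unfolding W_alg_def by simp
lemma plW: "pl Wa (c, t) = (c, u)" unfolding W_alg_def by simp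
lemma stW: assumes "t \<in> T" "y \<in> Y" shows "st Wa (act t y, t) = (y, u)"
proof -
  have "(THE z. z \<in> Y \<and> act t z = act t y) = y"
    using act_inj assms by (intro the_equality) auto
  thus ?thesis unfolding W_alg_def by simp
qed

lemma f_form: assumes "a \<in> C" obtains t y where "t \<in> T" "y \<in> Y" "f a = (act t y, t)"
proof -
  have "f a \<in> f ` C" using assms by (rule imageI)
  also have "f ` C = carr Wa" using fbij unfolding bij_betw_def by (elim conjE)
  finally have "f a \<in> {(act t y, t) |y t. y \<in> Y \<and> t \<in> T}" unfolding carrW .
  then obtain t y where "y \<in> Y" "t \<in> T" "f a = (act t y, t)" by blast
  thus ?thesis using that by blast
qed

lemma f_onto: assumes "p \<in> carr Wa" obtains a where "a \<in> C" "f a = p"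
proof -
  have "f ` C = carr Wa" using fbij unfolding bij_betw_def by (elim conjE)
  hence "p \<in> f ` C" using assms by simp
  thus ?thesis using that by blast
qed

lemma f_inj: "a \<in> C \<Longrightarrow> b \<in> C \<Longrightarrow> f a = f b \<Longrightarrow> a = b"
proof -
  assume h: "a \<in> C" "b \<in> C" "f a = f b"
  have "inj_on f C" using fbij unfolding bij_betw_def by (elim conjE)
  thus "a = b" using h unfolding inj_on_def by blast
qed

lemma f_st: assumes "a \<in> C" "t \<in> T" "y \<in> Y" "f a = (act t y, t)" shows "f (st S a) = (y, u)"
proof -
  have "f (st S a) = st Wa (f a)" using fst' assms(1) .
  also have "\<dots> = st Wa (act t y, t)" using assms(4) by (rule arg_cong)
  also have "\<dots> = (y, u)" using stW assms(2,3) .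
  finally show ?thesis .
qed

lemma fP: assumes "e \<in> P" obtains z where "z \<in> Y" "f e = (z, u)"
proof -
  obtain x where x: "x \<in> C" "e = st S x" using assms unfolding projections_def by blast
  obtain t y where "t \<in> T" "y \<in> Y" "f x = (act t y, t)" using f_form x by blast
  thus ?thesis using that f_st x by blast
qed

lemma Ppt: assumes "z \<in> Y" obtains e where "e \<in> P" "f e = (z, u)"
proof -
  have "(act u z, u) \<in> carr Wa" unfolding carrW using assms uT by blast
  then obtain a where a: "a \<in> C" "f a = (act u z, u)" using f_onto by blast
  hence "f (st S a) = (z, u)" using f_st uT assms by blast
  thus ?thesis using that[of "st S a"] st_P a by simp
qed

lemma sig_f: assumes "a \<in> C" "b \<in> C" shows "(a,b) \<in> sigma S \<longleftrightarrow> snd (f a) = snd (f b)"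
proof
  assume "(a,b) \<in> sigma S"
  then obtain e where e: "e \<in> P" and ee: "e \<cdot> a = e \<cdot> b" using sigma_iff by blast
  obtain z where z: "z \<in> Y" "f e = (z, u)" using fP e by blast
  obtain t y where ta: "t \<in> T" "y \<in> Y" "f a = (act t y, t)" using f_form assms by blast
  obtain s x where sb: "s \<in> T" "x \<in> Y" "f b = (act s x, s)" using f_form assms by blast
  have "f (e \<cdot> a) = (meet z (act u (act t y)), tm u t)" using fmul e z ta assms mulW by simp
  moreover have "f (e \<cdot> b) = (meet z (act u (act s x)), tm u s)" using fmul e z sb assms mulW by simp
  ultimately have "tm u t = tm u s" using ee by simp
  thus "snd (f a) = snd (f b)" using ta sb tm_u by simp
next
  assume h: "snd (f a) = snd (f b)"
  obtain t y where ta: "t \<in> T" "y \<in> Y" "f a = (act t y, t)" using f_form assms by blast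
  obtain s x where sb0: "s \<in> T" "x \<in> Y" "f b = (act s x, s)" using f_form[OF assms(2)] by blast
  have "s = t" using h ta sb0 by simp
  hence sb: "x \<in> Y" "f b = (act t x, t)" using sb0 by auto
  define d where "d = meet (act t y) (act t x)"
  have dY: "d \<in> Y" unfolding d_def using meetY actY ta sb by simp
  obtain e where e: "e \<in> P" "f e = (d, u)" using Ppt dY by blast
  have cY: "act t y \<in> Y" "act t x \<in> Y" using actY ta sb by auto
  have "meet d (act t y) = meet (act t y) (meet (act t x) (act t y))" unfolding d_def using meet_assoc cY by simp
  also have "\<dots> = meet (act t y) (meet (act t y) (act t x))" using meet_comm[of "act t x" "act t y"] cY by simp
  also have "\<dots> = meet (meet (act t y) (act t y)) (act t x)" using meet_assoc cY by simp
  also have "\<dots> = d" unfolding d_def using meet_idem cY by simp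
  finally have 1: "meet d (act t y) = d" .
  have "meet d (act t x) = meet (act t y) (meet (act t x) (act t x))" unfolding d_def using meet_assoc cY by simp
  also have "\<dots> = d" unfolding d_def using meet_idem cY by simp
  finally have 2: "meet d (act t x) = d" .
  have "f (e \<cdot> a) = (d, t)" using fmul e ta assms mulW act_u actY tm_u 1 by simp
  moreover have "f (e \<cdot> b) = (d, t)" using fmul e sb ta assms mulW act_u actY tm_u 2 by simp
  ultimately have "e \<cdot> a = e \<cdot> b" using f_inj e assms by simp
  thus "(a,b) \<in> sigma S" using sigma_iff e assms by blast
qed

lemma W_proper: "proper S"
  unfolding proper_def
proof (intro ballI conjI impI)
  fix a b assume ab: "a \<in> C" "b \<in> C"
  obtain t y where ta: "t \<in> T" "y \<in> Y" "f a = (act t y, t)" using f_form ab by blast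
  obtain s x where sb: "s \<in> T" "x \<in> Y" "f b = (act s x, s)" using f_form ab by blast
  {
    assume h: "st S a = st S b \<and> (a,b) \<in> sigma S"
    hence "s = t" using sig_f ab ta sb by simp
    moreover have "(y, u) = (x, u)"
    proof -
      have "(y, u) = f (st S a)" using f_st ab ta by simp
      also have "\<dots> = f (st S b)" using h by simp
      also have "\<dots> = (x, u)" using f_st ab sb by simp
      finally show ?thesis .
    qed
    ultimately show "a = b" using f_inj ab ta sb by simp
  next
    assume h: "pl S a = pl S b \<and> (a,b) \<in> sigma S"
    hence "s = t" using sig_f ab ta sb by simp
    moreover have "f (pl S a) = f (pl S b)" using h by simp
    hence "act t y = act s x" using fpl ab ta sb plW by simp
    ultimately show "a = b" using f_inj ab ta sb by simp
  }
qed

lemma W_lat: "left_action_total S"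
  unfolding left_action_total_def lpa_defined_def proj_le_def
proof (intro ballI)
  fix t' e assume t': "t' \<in> sigma_classes S" and e: "e \<in> P"
  obtain a where a: "a \<in> C" "t' = sigma S `` {a}" using t' unfolding sigma_classes_def by (rule quotientE)
  obtain t y where ta: "t \<in> T" "y \<in> Y" "f a = (act t y, t)" using f_form a by blast
  obtain z where z: "z \<in> Y" "f e = (z, u)" using fP e by blast
  have "(act t z, t) \<in> carr Wa" unfolding carrW using z ta by blast
  then obtain b where b: "b \<in> C" "f b = (act t z, t)" using f_onto by blast
  have "(a, b) \<in> sigma S" using sig_f a b ta by simp
  hence bt: "b \<in> t'" using a by simp
  have fsb: "f (st S b) = (z, u)" using f_st b ta z by blast
  have "f (e \<cdot> st S b) = (meet z (act u z), tm u u)" using fmul e b fsb z mulW by simp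
  also have "\<dots> = f e" using z act_u meet_idem tm_u uT by simp
  finally have "e \<cdot> st S b = e" using f_inj e b by simp
  thus "\<exists>b\<in>t'. e = e \<cdot> st S b" using bt by (intro bexI[where x=b]) auto
qed

end

context wiso begin

lemma f_le: assumes "e1 \<in> C" "e2 \<in> C" shows "e1 = e1 \<cdot> e2 \<longleftrightarrow> f e1 = f (e1 \<cdot> e2)"
  using f_inj assms by auto

lemma f_lpa: assumes a: "a \<in> C" and ta: "t \<in> T" "y \<in> Y" "f a = (act t y, t)"
  and e: "e \<in> P" and z: "z \<in> Y" "f e = (z, u)"
  shows "lpa S (sigma S `` {a}) e \<in> P \<and> f (lpa S (sigma S `` {a}) e) = (act t z, u)"
proof -
  define t' where "t' = sigma S `` {a}"
  have t': "t' \<in> sigma_classes S" unfolding t'_def sigma_classes_def using a by (rule quotientI)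
  define c where "c = (SOME c. c \<in> t' \<and> proj_le S e (st S c))"
  have "\<exists>c. c \<in> t' \<and> proj_le S e (st S c)" using W_lat t' e
    unfolding left_action_total_def lpa_defined_def by blast
  from someI_ex[OF this] have c: "c \<in> t'" "e = e \<cdot> st S c" unfolding c_def proj_le_def by auto
  have sac: "(a, c) \<in> sigma S" using c(1) unfolding t'_def by simp
  hence cC: "c \<in> C" using sig_C by blast
  obtain s yc where sc: "s \<in> T" "yc \<in> Y" "f c = (act s yc, s)" using f_form cC by blast
  have "snd (f a) = snd (f c)" using sig_f a cC sac by blast
  hence "s = t" using ta sc by simp
  hence fc: "f c = (act t yc, t)" using sc by simp
  have fsc: "f (st S c) = (yc, u)" using f_st cC ta(1) sc(2) fc by blast
  have "(z, u) = f (e \<cdot> st S c)" using c(2) z by simp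
  also have "\<dots> = mul Wa (f e) (f (st S c))" using fmul e cC by simp
  also have "\<dots> = (meet z yc, u)" using z fsc mulW act_u sc tm_u uT by simp
  finally have zy: "meet z yc = z" by simp
  have "meet (act t z) (act t yc) = act t z" using act_ord[of t z yc] zy ta z sc by blast
  hence 1: "meet (act t yc) (act t z) = act t z" using meet_comm actY ta z sc by simp
  have "f (c \<cdot> e) = mul Wa (f c) (f e)" using fmul e cC by simp
  also have "\<dots> = (act t z, t)" using fc z mulW 1 tm_u ta by simp
  finally have "f (pl S (c \<cdot> e)) = (act t z, u)" using fpl cC e plW by simp
  moreover have "lpa S t' e = pl S (c \<cdot> e)" unfolding lpa_def c_def by simp
  ultimately show ?thesis using cC e unfolding t'_def by simp
qed

lemma SD_laboa: assumes sd: "\<forall>t\<in>T. act t ` Y = Y" shows "left_action_by_order_automorphisms S"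
  unfolding left_action_by_order_automorphisms_def
proof (intro conjI ballI)
  show "left_action_total S" by (rule W_lat)
  fix t' assume t': "t' \<in> sigma_classes S"
  obtain a where a: "a \<in> C" "t' = sigma S `` {a}" using t' unfolding sigma_classes_def by (rule quotientE)
  obtain t y where ta: "t \<in> T" "y \<in> Y" "f a = (act t y, t)" using f_form a by blast
  have L: "\<And>e z. e \<in> P \<Longrightarrow> z \<in> Y \<Longrightarrow> f e = (z, u) \<Longrightarrow> lpa S t' e \<in> P \<and> f (lpa S t' e) = (act t z, u)"
    using f_lpa a ta by simp
  show "bij_betw (lpa S t') P P" unfolding bij_betw_def
  proof (intro conjI)
    show "inj_on (lpa S t') P" unfolding inj_on_def
    proof (intro ballI impI)
      fix e1 e2 assume e: "e1 \<in> P" "e2 \<in> P" "lpa S t' e1 = lpa S t' e2"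
      obtain z1 where z1: "z1 \<in> Y" "f e1 = (z1, u)" using fP e by blast
      obtain z2 where z2: "z2 \<in> Y" "f e2 = (z2, u)" using fP e by blast
      have "(act t z1, u) = (act t z2, u)" using L[OF e(1) z1] L[OF e(2) z2] e(3) by simp
      hence "z1 = z2" using act_inj ta z1 z2 by simp
      thus "e1 = e2" using f_inj e z1 z2 by simp
    qed
    show "lpa S t' ` P = P"
    proof (intro equalityI subsetI)
      fix x assume "x \<in> lpa S t' ` P"
      then obtain e where e: "e \<in> P" "x = lpa S t' e" by blast
      obtain z where "z \<in> Y" "f e = (z, u)" using fP e by blast
      thus "x \<in> P" using L e by blast
    next
      fix e' assume e': "e' \<in> P"
      obtain z' where z': "z' \<in> Y" "f e' = (z', u)" using fP e' by blast
      have "z' \<in> act t ` Y" using sd ta z' by blast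
      then obtain z where z: "z \<in> Y" "z' = act t z" by blast
      obtain e where e: "e \<in> P" "f e = (z, u)" using Ppt z by blast
      have "f (lpa S t' e) = f e'" using L[OF e(1) z(1) e(2)] z z' by simp
      hence "lpa S t' e = e'" using f_inj L[OF e(1) z(1) e(2)] e' by simp
      thus "e' \<in> lpa S t' ` P" using e by blast
    qed
  qed
  fix e1 assume e1: "e1 \<in> P"
  fix e2 assume e2: "e2 \<in> P"
  obtain z1 where z1: "z1 \<in> Y" "f e1 = (z1, u)" using fP e1 by blast
  obtain z2 where z2: "z2 \<in> Y" "f e2 = (z2, u)" using fP e2 by blast
  have l1: "lpa S t' e1 \<in> P" "f (lpa S t' e1) = (act t z1, u)" using L[OF e1 z1] by auto
  have l2: "lpa S t' e2 \<in> P" "f (lpa S t' e2) = (act t z2, u)" using L[OF e2 z2] by auto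
  have "proj_le S e1 e2 \<longleftrightarrow> f e1 = f (e1 \<cdot> e2)" unfolding proj_le_def using f_le e1 e2 by simp
  also have "\<dots> \<longleftrightarrow> (z1, u) = (meet z1 z2, u)" using fmul e1 e2 z1 z2 mulW act_u tm_u uT by simp
  also have "\<dots> \<longleftrightarrow> meet z1 z2 = z1" by auto
  also have "\<dots> \<longleftrightarrow> meet (act t z1) (act t z2) = act t z1" by (rule act_ord[OF ta(1) z1(1) z2(1)])
  also have "\<dots> \<longleftrightarrow> f (lpa S t' e1) = f (lpa S t' e1 \<cdot> lpa S t' e2)"
    using fmul l1 l2 mulW act_u tm_u uT actY ta z1 z2 by auto
  also have "\<dots> \<longleftrightarrow> proj_le S (lpa S t' e1) (lpa S t' e2)" unfolding proj_le_def using f_le l1 l2 by simp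
  finally show "proj_le S e1 e2 \<longleftrightarrow> proj_le S (lpa S t' e1) (lpa S t' e2)" .
qed

end

context plt begin

lemma laboa_iff_rat: "left_action_by_order_automorphisms S \<longleftrightarrow> right_action_total S"
proof
  assume h: "left_action_by_order_automorphisms S"
  show "right_action_total S" unfolding right_action_total_def rpa_defined_def
  proof (intro ballI)
    fix t e assume t: "t \<in> T" and e: "e \<in> P"
    have "bij_betw (lpa S t) P P" using h t unfolding left_action_by_order_automorphisms_def by blast
    hence "e \<in> lpa S t ` P" using e unfolding bij_betw_def by simp
    then obtain f where f: "f \<in> P" "e = lpa S t f" by blast
    have "lpa_defined S t f" using lat t f unfolding left_action_total_def by blast
    thus "\<exists>f\<in>P. lpa_defined S t f \<and> lpa S t f = e" using f by blast
  qed
next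
  assume h: "right_action_total S"
  show "left_action_by_order_automorphisms S" unfolding left_action_by_order_automorphisms_def
  proof (intro conjI ballI)
    show "left_action_total S" by (rule lat)
    fix t assume t: "t \<in> T"
    show "bij_betw (lpa S t) P P" unfolding bij_betw_def
    proof (intro conjI)
      show "inj_on (lpa S t) P" unfolding inj_on_def using lpa_inj t by blast
      show "lpa S t ` P = P"
      proof (intro equalityI subsetI)
        fix x assume "x \<in> lpa S t ` P" thus "x \<in> P" using lpa_P t by blast
      next
        fix e assume e: "e \<in> P"
        then obtain f where "f \<in> P" "lpa S t f = e" using h t unfolding right_action_total_def rpa_defined_def by blast
        thus "e \<in> lpa S t ` P" by blast
      qed
    qed
    fix e f assume "e \<in> P" "f \<in> P"
    thus "proj_le S e f \<longleftrightarrow> proj_le S (lpa S t e) (lpa S t f)"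
      unfolding proj_le_def using lpa_le[OF t] by (metis (no_types, lifting))
  qed
qed

end

lemma W_to:
  assumes rsS: "restriction_semigroup S" and wd: "W_data T tm u Y meet act"
    and iso: "isomorphic S (W_alg T tm u Y meet act)"
  shows "proper S \<and> left_action_total S"
proof -
  obtain f where f: "bij_betw f (carr S) (carr (W_alg T tm u Y meet act))"
    "\<forall>x\<in>carr S. \<forall>y\<in>carr S. f (mul S x y) = mul (W_alg T tm u Y meet act) (f x) (f y)"
    "\<forall>x\<in>carr S. f (st S x) = st (W_alg T tm u Y meet act) (f x) \<and> f (pl S x) = pl (W_alg T tm u Y meet act) (f x)"
    using iso unfolding isomorphic_def by blast
  interpret wiso S T tm u Y meet act f
    by unfold_locales (use rsS wd f in auto)
  show ?thesis using W_proper W_lat by simp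
qed

lemma SD_to:
  assumes rsS: "restriction_semigroup S" and sd: "SD_data T tm u Y meet act"
    and iso: "isomorphic S (W_alg T tm u Y meet act)"
  shows "proper S \<and> left_action_by_order_automorphisms S"
proof -
  obtain f where f: "bij_betw f (carr S) (carr (W_alg T tm u Y meet act))"
    "\<forall>x\<in>carr S. \<forall>y\<in>carr S. f (mul S x y) = mul (W_alg T tm u Y meet act) (f x) (f y)"
    "\<forall>x\<in>carr S. f (st S x) = st (W_alg T tm u Y meet act) (f x) \<and> f (pl S x) = pl (W_alg T tm u Y meet act) (f x)"
    using iso unfolding isomorphic_def by blast
  have wd: "W_data T tm u Y meet act" and sd': "\<forall>t\<in>T. act t ` Y = Y" using sd unfolding SD_data_def by auto
  interpret wiso S T tm u Y meet act f
    by unfold_locales (use rsS wd f in auto)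
  show ?thesis using W_proper SD_laboa sd' by simp
qed

lemma empty_W:
  fixes S :: "'a r_alg"
  assumes "carr S = {}"
  shows "W_data {{}::'a set} (\<lambda>_ _. {}) {} ({}::'a set) (\<lambda>x y. x) (\<lambda>t y. y)"
    and "isomorphic S (W_alg {{}::'a set} (\<lambda>_ _. {}) {} ({}::'a set) (\<lambda>x y. x) (\<lambda>t y. y))"
proof -
  show "W_data {{}::'a set} (\<lambda>_ _. {}) {} ({}::'a set) (\<lambda>x y. x) (\<lambda>t y. y)"
    unfolding W_data_def by simp
  have "bij_betw (\<lambda>x. undefined) (carr S) (carr (W_alg {{}::'a set} (\<lambda>_ _. {}) {} ({}::'a set) (\<lambda>x y. x) (\<lambda>t y. y)))"
    unfolding W_alg_def using assms by (simp add: bij_betw_def)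
  thus "isomorphic S (W_alg {{}::'a set} (\<lambda>_ _. {}) {} ({}::'a set) (\<lambda>x y. x) (\<lambda>t y. y))"
    unfolding isomorphic_def using assms by blast
qed

lemma to_W:
  fixes S :: "'a r_alg"
  assumes rsS: "restriction_semigroup S" and pr: "proper S" and lat: "left_action_total S"
  shows "iso_to_W_product S"
proof (cases "carr S = {}")
  case True
  thus ?thesis unfolding iso_to_W_product_def using empty_W by blast
next
  case False
  interpret plt S by unfold_locales (use rsS pr lat in auto)
  show ?thesis unfolding iso_to_W_product_def using W_data_S[OF False] iso_S[OF False] by blast
qed

lemma to_SD:
  fixes S :: "'a r_alg"
  assumes rsS: "restriction_semigroup S" and pr: "proper S" and lab: "left_action_by_order_automorphisms S"
  shows "iso_to_semidirect_product S"
proof (cases "carr S = {}")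
  case True
  thus ?thesis unfolding iso_to_semidirect_product_def SD_data_def using empty_W by blast
next
  case False
  have lat: "left_action_total S" using lab unfolding left_action_by_order_automorphisms_def by blast
  interpret plt S by unfold_locales (use rsS pr lat in auto)
  have "\<forall>t\<in>T. lpa S t ` P = P" using lab unfolding left_action_by_order_automorphisms_def bij_betw_def by blast
  thus ?thesis unfolding iso_to_semidirect_product_def SD_data_def
    using W_data_S[OF False] iso_S[OF False] by blast
qed

theorem proposition3p3:
  fixes S :: "'a r_alg"
  assumes "restriction_semigroup S"
  shows
    "(iso_to_W_product S \<longleftrightarrow> proper S \<and> left_action_total S) \<and>
     (\<forall>(T :: 't set) tm u (Y :: 'y set) meet act.
        W_data T tm u Y meet act \<and> isomorphic S (W_alg T tm u Y meet act)
        \<longrightarrow> proper S \<and> left_action_total S) \<and>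
     (iso_to_semidirect_product S \<longleftrightarrow> proper S \<and> left_action_by_order_automorphisms S) \<and>
     (iso_to_semidirect_product S \<longleftrightarrow>
        proper S \<and> left_action_total S \<and> right_action_total S) \<and>
     (\<forall>(T :: 't set) tm u (Y :: 'y set) meet act.
        SD_data T tm u Y meet act \<and> isomorphic S (W_alg T tm u Y meet act)
        \<longrightarrow> proper S \<and> left_action_by_order_automorphisms S)"
proof -
  have 1: "iso_to_W_product S \<longleftrightarrow> proper S \<and> left_action_total S"
  proof
    assume "iso_to_W_product S"
    then obtain T :: "'a set set" and tm u and Y :: "'a set" and meet act where
      "W_data T tm u Y meet act" "isomorphic S (W_alg T tm u Y meet act)"
      unfolding iso_to_W_product_def by blast
    thus "proper S \<and> left_action_total S" by (rule W_to[OF assms])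
  next
    assume "proper S \<and> left_action_total S"
    thus "iso_to_W_product S" using to_W[OF assms] by blast
  qed
  have 3: "iso_to_semidirect_product S \<longleftrightarrow> proper S \<and> left_action_by_order_automorphisms S"
  proof
    assume "iso_to_semidirect_product S"
    then obtain T :: "'a set set" and tm u and Y :: "'a set" and meet act where
      "SD_data T tm u Y meet act" "isomorphic S (W_alg T tm u Y meet act)"
      unfolding iso_to_semidirect_product_def by blast
    thus "proper S \<and> left_action_by_order_automorphisms S" by (rule SD_to[OF assms])
  next
    assume "proper S \<and> left_action_by_order_automorphisms S"
    thus "iso_to_semidirect_product S" using to_SD[OF assms] by blast
  qed
  have 4: "proper S \<and> left_action_by_order_automorphisms S \<longleftrightarrow>
        proper S \<and> left_action_total S \<and> right_action_total S"
  proof (cases "proper S \<and> left_action_total S")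
    case True
    interpret plt S by unfold_locales (use assms True in auto)
    show ?thesis using laboa_iff_rat True by blast
  next
    case False
    thus ?thesis unfolding left_action_by_order_automorphisms_def by blast
  qed
  show ?thesis
  proof (intro conjI)
    show "iso_to_W_product S \<longleftrightarrow> proper S \<and> left_action_total S" by (rule 1)
    show "iso_to_semidirect_product S \<longleftrightarrow> proper S \<and> left_action_by_order_automorphisms S" by (rule 3)
    show "iso_to_semidirect_product S \<longleftrightarrow> proper S \<and> left_action_total S \<and> right_action_total S"
      using 3 4 by simp
    show "\<forall>(T :: 't set) tm u (Y :: 'y set) meet act.
        W_data T tm u Y meet act \<and> isomorphic S (W_alg T tm u Y meet act)
        \<longrightarrow> proper S \<and> left_action_total S"
      by (intro allI impI, elim conjE, rule W_to[OF assms])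
    show "\<forall>(T :: 't set) tm u (Y :: 'y set) meet act.
        SD_data T tm u Y meet act \<and> isomorphic S (W_alg T tm u Y meet act)
        \<longrightarrow> proper S \<and> left_action_by_order_automorphisms S"
      by (intro allI impI, elim conjE, rule SD_to[OF assms])
  qed
qed

end
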